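(* Let $I\subset S$ be a squarefree monomial ideal generated in degree $2$ which has a ($2$-)linear resolution. Then after a suitable renumbering of the variables, $I$ is weakly polymatroidal.
   Context: $S=K[x_1,\dots,x_n]$, $K$ a field, with lexicographic order $>_{lex}$ induced by $x_1>x_2>\cdots>x_n$; $G(I)$ is the minimal monomial generating set. A monomial ideal $I$ is weakly polymatroidal if for every two monomials $u=x_1^{a_1}\cdots x_n^{a_n}>_{lex}v=x_1^{b_1}\cdots x_n^{b_n}$ in $G(I)$ with $a_1=b_1,\dots,a_{t-1}=b_{t-1}$ and $a_t>b_t$, there exists $j>t$ such that $x_t(v/x_j)\in I$. *)

theory Defs
  imports Main "HOL-Combinatorics.Permutations"
begin

text \<open>Monomials of S = K[x_1,...,x_n] are exponent vectors u :: nat => nat supported in {1..n}.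
A monomial ideal is identified with the set of monomials it contains.\<close>

type_synonym monomial = "nat \<Rightarrow> nat"

definition monomials :: "nat \<Rightarrow> monomial set" where
  "monomials n = {u. \<forall>i. i \<notin> {1..n} \<longrightarrow> u i = 0}"

definition mdeg :: "nat \<Rightarrow> monomial \<Rightarrow> nat" where
  "mdeg n u = (\<Sum>i\<in>{1..n}. u i)"

definition is_monomial_ideal :: "nat \<Rightarrow> monomial set \<Rightarrow> bool" where
  "is_monomial_ideal n I \<longleftrightarrow> I \<subseteq> monomials n \<and>
     (\<forall>u\<in>I. \<forall>v\<in>monomials n. u \<le> v \<longrightarrow> v \<in> I)"

definition mingens :: "monomial set \<Rightarrow> monomial set" where
  "mingens I = {u\<in>I. \<forall>v\<in>I. v \<le> u \<longrightarrow> v = u}"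

definition squarefree_gen_deg2 :: "nat \<Rightarrow> monomial set \<Rightarrow> bool" where
  "squarefree_gen_deg2 n I \<longleftrightarrow> (\<forall>u\<in>mingens I. (\<forall>i. u i \<le> 1) \<and> mdeg n u = 2)"

text \<open>Koszul complex I \<otimes> K(x_1,...,x_n), whose homology is Tor^S_i(I,K).
A basis element u \<otimes> e_F (u a monomial of I, F \<subseteq> {1..n}) has homological degree card F
and internal degree deg u + card F. Chains are K-valued coefficient functions on pairs (u,F).\<close>

definition kbasis :: "nat \<Rightarrow> monomial set \<Rightarrow> nat \<Rightarrow> nat \<Rightarrow> (monomial \<times> nat set) set" where
  "kbasis n I i j = {(u,F). u \<in> I \<and> F \<subseteq> {1..n} \<and> card F = i \<and> mdeg n u + i = j}"

text \<open>d(u \<otimes> e_F) = \<Sum>_{k\<in>F} (-1)^{#{l\<in>F. l<k}} (x_k u) \<otimes> e_{F-{k}}, expressed on coefficients.\<close>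
definition kdiff :: "nat \<Rightarrow> (monomial \<times> nat set \<Rightarrow> 'k::field) \<Rightarrow> (monomial \<times> nat set \<Rightarrow> 'k)" where
  "kdiff n c = (\<lambda>(w,G). \<Sum>k\<in>{1..n} - G.
      if 1 \<le> w k then (-1) ^ card {l\<in>G. l < k} * c (w(k := w k - 1), insert k G) else 0)"

definition supported_on :: "('b \<Rightarrow> 'k::zero) \<Rightarrow> 'b set \<Rightarrow> bool" where
  "supported_on c B \<longleftrightarrow> (\<forall>x. x \<notin> B \<longrightarrow> c x = 0)"

text \<open>I has a d-linear resolution over K: Tor_i(I,K)_j = 0 (graded Betti numbers vanish)
for all j \<noteq> i + d, i.e. the Koszul complex is exact at (i,j).\<close>
definition has_linear_resolution :: "'k::field itself \<Rightarrow> nat \<Rightarrow> nat \<Rightarrow> monomial set \<Rightarrow> bool" where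
  "has_linear_resolution (_::'k itself) d n I \<longleftrightarrow>
     (\<forall>i j. j \<noteq> i + d \<longrightarrow>
        (\<forall>c :: monomial \<times> nat set \<Rightarrow> 'k. supported_on c (kbasis n I i j) \<and> kdiff n c = (\<lambda>_. 0) \<longrightarrow>
           (\<exists>b :: monomial \<times> nat set \<Rightarrow> 'k. supported_on b (kbasis n I (i+1) j) \<and> kdiff n b = c)))"

definition weakly_polymatroidal :: "nat \<Rightarrow> monomial set \<Rightarrow> bool" where
  "weakly_polymatroidal n I \<longleftrightarrow>
     (\<forall>u\<in>mingens I. \<forall>v\<in>mingens I. \<forall>t\<in>{1..n}.
        (\<forall>l\<in>{1..n}. l < t \<longrightarrow> u l = v l) \<and> u t > v t \<longrightarrow>
        (\<exists>j. t < j \<and> j \<le> n \<and> 1 \<le> v j \<and> (v(t := v t + 1))(j := v j - 1) \<in> I))"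

text \<open>Renumbering of variables by a permutation \<sigma> of {1..n}: new variable x_i is old x_{\<sigma> i}.\<close>
definition renumber :: "(nat \<Rightarrow> nat) \<Rightarrow> monomial set \<Rightarrow> monomial set" where
  "renumber \<sigma> I = (\<lambda>u. u \<circ> \<sigma>) ` I"

end

theory Submission
  imports Defs
begin


definition cyc :: "(nat \<Rightarrow> nat \<Rightarrow> bool) \<Rightarrow> (nat \<Rightarrow> nat) \<Rightarrow> nat \<Rightarrow> bool" where
  "cyc adj w m \<longleftrightarrow> 4 \<le> m \<and> inj_on w {..<m} \<and>
     (\<forall>i<m. \<forall>j<m. adj (w i) (w j) \<longleftrightarrow> (j = i + 1 \<or> i = j + 1 \<or> (i = 0 \<and> j = m - 1) \<or> (j = 0 \<and> i = m - 1)))"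

definition simpl :: "(nat \<Rightarrow> nat \<Rightarrow> bool) \<Rightarrow> nat set \<Rightarrow> nat \<Rightarrow> bool" where
  "simpl adj V x \<longleftrightarrow> x \<in> V \<and> (\<forall>y\<in>V. \<forall>z\<in>V. adj x y \<longrightarrow> adj x z \<longrightarrow> y \<noteq> z \<longrightarrow> adj y z)"

lemma rtranclp_path:
  assumes "r\<^sup>*\<^sup>* x y"
  shows "\<exists>k p. p 0 = x \<and> p k = y \<and> (\<forall>i<k. r (p i) (p (Suc i)))"
  using assms
proof (induction rule: rtranclp_induct)
  case base
  then show ?case by (rule exI[of _ 0], rule exI[of _ "\<lambda>_. x"]) auto
next
  case (step y z)
  then obtain k p where p: "p 0 = x" "p k = y" "\<forall>i<k. r (p i) (p (Suc i))" by blast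
  show ?case
    apply (rule exI[of _ "Suc k"], rule exI[of _ "p(Suc k := z)"])
    using p step by (auto simp: less_Suc_eq)
qed

locale graph =
  fixes adj :: "nat \<Rightarrow> nat \<Rightarrow> bool"
  assumes sym: "adj x y \<Longrightarrow> adj y x"
    and irr: "\<not> adj x x"
    and nocyc: "\<not> cyc adj w m"
begin

definition pathP :: "nat set \<Rightarrow> nat \<Rightarrow> nat \<Rightarrow> nat \<Rightarrow> (nat \<Rightarrow> nat) \<Rightarrow> bool" where
  "pathP C s t k p \<longleftrightarrow> (\<forall>i\<le>k. p i \<in> C) \<and> (\<forall>i<k. adj (p i) (p (Suc i))) \<and> adj s (p 0) \<and> adj t (p k)"

lemma short_s:
  assumes "pathP C s t k p" "0 < i" "i \<le> k" "adj s (p i)"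
  shows "pathP C s t (k - i) (\<lambda>l. p (l + i))"
  using assms unfolding pathP_def by auto

lemma short_t:
  assumes "pathP C s t k p" "i \<le> k" "adj t (p i)"
  shows "pathP C s t i p"
  using assms unfolding pathP_def by auto

lemma short_chord:
  assumes "pathP C s t k p" "i + 1 < j" "j \<le> k" "adj (p i) (p j)"
  shows "pathP C s t (k - (j - i - 1)) (\<lambda>l. if l \<le> i then p l else p (l + (j - i - 1)))"
  using assms unfolding pathP_def
  apply (intro conjI)
  subgoal by auto
  subgoal
  proof (intro allI impI)
    fix l assume "l < k - (j - i - 1)"
    then show "adj (if l \<le> i then p l else p (l + (j - i - 1)))
            (if Suc l \<le> i then p (Suc l) else p (Suc l + (j - i - 1)))"
      using assms unfolding pathP_def
      by (cases "l < i"; cases "l = i") (auto)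
  qed
  subgoal by auto
  subgoal using assms unfolding pathP_def by auto
  done

lemma short_eq:
  assumes "pathP C s t k p" "i < j" "j \<le> k" "p i = p j"
  shows "pathP C s t (k - (j - i)) (\<lambda>l. if l < i then p l else p (l + (j - i)))"
  using assms unfolding pathP_def
  apply (intro conjI)
  subgoal by auto
  subgoal
  proof (intro allI impI)
    fix l assume "l < k - (j - i)"
    then show "adj (if l < i then p l else p (l + (j - i)))
            (if Suc l < i then p (Suc l) else p (Suc l + (j - i)))"
      using assms unfolding pathP_def
    proof (cases "Suc l < i")
      case True then show ?thesis using assms \<open>l < k - (j - i)\<close> unfolding pathP_def by auto
    next
      case False
      show ?thesis
      proof (cases "Suc l = i")
        case True
        have "l < k" using True assms(2,3) by simp
        then have "adj (p l) (p (Suc l))" using assms(1) unfolding pathP_def by blast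
        moreover have "Suc (l + (j - Suc l)) = j" using True assms(2) by simp
        ultimately show ?thesis using True False assms(4) by auto
      next
        case F2: False
        then show ?thesis using False assms \<open>l < k - (j - i)\<close> unfolding pathP_def by auto
      qed
    qed
  qed
  subgoal using assms unfolding pathP_def by (cases "i = 0") auto
  subgoal using assms unfolding pathP_def by auto
  done


lemma no_path:
  assumes as: "adj a s" and at: "adj a t" and st: "s \<noteq> t" "\<not> adj s t"
    and C: "\<forall>c\<in>C. \<not> adj a c \<and> c \<noteq> a \<and> c \<noteq> s \<and> c \<noteq> t"
    and P: "pathP C s t k0 p0"
  shows False
proof -
  define K where "K = (LEAST k. \<exists>p. pathP C s t k p)"
  have ex: "\<exists>p. pathP C s t K p" unfolding K_def by (rule LeastI_ex) (use P in blast)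
  have min: "\<And>k' p'. pathP C s t k' p' \<Longrightarrow> K \<le> k'" unfolding K_def by (auto intro: Least_le)
  from ex obtain p where p: "pathP C s t K p" by blast
  have pC: "\<And>i. i \<le> K \<Longrightarrow> p i \<in> C" using p unfolding pathP_def by auto
  have f1: "\<And>i. 0 < i \<Longrightarrow> i \<le> K \<Longrightarrow> \<not> adj s (p i)"
  proof
    fix i assume "0 < i" "i \<le> K" "adj s (p i)"
    from min[OF short_s[OF p this]] \<open>0 < i\<close> \<open>i \<le> K\<close> show False by simp
  qed
  have f2: "\<And>i. i < K \<Longrightarrow> \<not> adj t (p i)"
  proof
    fix i assume "i < K" "adj t (p i)"
    have "i \<le> K" using \<open>i < K\<close> by simp
    from min[OF short_t[OF p this \<open>adj t (p i)\<close>]] \<open>i < K\<close> show False by simp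
  qed
  have f3: "\<And>i j. i + 1 < j \<Longrightarrow> j \<le> K \<Longrightarrow> \<not> adj (p i) (p j)"
  proof
    fix i j assume "i + 1 < j" "j \<le> K" "adj (p i) (p j)"
    from min[OF short_chord[OF p this]] \<open>i + 1 < j\<close> \<open>j \<le> K\<close> show False by simp
  qed
  have f4: "\<And>i j. i < j \<Longrightarrow> j \<le> K \<Longrightarrow> p i \<noteq> p j"
  proof
    fix i j assume "i < j" "j \<le> K" "p i = p j"
    from min[OF short_eq[OF p this]] \<open>i < j\<close> \<open>j \<le> K\<close> show False by simp
  qed
  have padj: "\<And>i j. i \<le> K \<Longrightarrow> j \<le> K \<Longrightarrow> adj (p i) (p j) \<longleftrightarrow> (j = i + 1 \<or> i = j + 1)"
  proof -
    fix i j assume ij: "i \<le> K" "j \<le> K"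
    have pa: "\<And>i. i < K \<Longrightarrow> adj (p i) (p (Suc i))" using p unfolding pathP_def by auto
    show "adj (p i) (p j) \<longleftrightarrow> (j = i + 1 \<or> i = j + 1)"
    proof
      assume "adj (p i) (p j)"
      show "j = i + 1 \<or> i = j + 1"
      proof (rule ccontr)
        assume "\<not> (j = i + 1 \<or> i = j + 1)"
        then have "i = j \<or> i + 1 < j \<or> j + 1 < i" by arith
        then show False
        proof (elim disjE)
          assume "i = j" then show False using \<open>adj (p i) (p j)\<close> irr by simp
        next
          assume "i + 1 < j" then show False using f3[of i j] ij \<open>adj (p i) (p j)\<close> by simp
        next
          assume "j + 1 < i" then show False using f3[of j i] ij sym[OF \<open>adj (p i) (p j)\<close>] by simp
        qed
      qed
    next
      assume "j = i + 1 \<or> i = j + 1"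
      then show "adj (p i) (p j)"
      proof
        assume "j = i + 1" then show ?thesis using pa[of i] ij by simp
      next
        assume "i = j + 1" then show ?thesis using pa[of j] ij sym by simp
      qed
    qed
  qed
  have sp0: "adj s (p 0)" and tpK: "adj t (p K)" using p unfolding pathP_def by auto
  define m where "m = K + 4"
  define w where "w l = (if l = 0 then a else if l = 1 then s else if l < K + 3 then p (l - 2) else t)" for l
  have Cp: "\<And>i. i \<le> K \<Longrightarrow> \<not> adj a (p i) \<and> p i \<noteq> a \<and> p i \<noteq> s \<and> p i \<noteq> t"
    using C pC by blast
  have as2: "a \<noteq> s" "a \<noteq> t" using as at irr by auto
  have wcases: "i = 0 \<or> i = 1 \<or> (\<exists>l\<le>K. i = l + 2) \<or> i = K + 3" if "i < m" for i
  proof (cases "2 \<le> i \<and> i < K + 3")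
    case True then have "i - 2 \<le> K \<and> i = (i - 2) + 2" by auto
    then show ?thesis by blast
  next
    case False with \<open>i < m\<close> show ?thesis unfolding m_def by auto
  qed
  have w0: "w 0 = a" and w1: "w 1 = s" and wt: "w (K + 3) = t" unfolding w_def by auto
  have wl: "\<And>l. l \<le> K \<Longrightarrow> w (l + 2) = p l" unfolding w_def by auto
  have pd: "\<And>l. l \<le> K \<Longrightarrow> p l \<noteq> a \<and> p l \<noteq> s \<and> p l \<noteq> t \<and> a \<noteq> p l \<and> s \<noteq> p l \<and> t \<noteq> p l"
    using Cp by metis
  have pinj: "\<And>l l'. l \<le> K \<Longrightarrow> l' \<le> K \<Longrightarrow> p l = p l' \<longleftrightarrow> l = l'"
    using f4 by (metis linorder_neqE_nat)
  have adjs: "adj a s" "adj s a" "adj a t" "adj t a" "\<not> adj s t" "\<not> adj t s"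
    "\<not> adj a a" "\<not> adj s s" "\<not> adj t t"
    "\<And>l. l \<le> K \<Longrightarrow> \<not> adj a (p l) \<and> \<not> adj (p l) a"
    "adj s (p 0)" "adj (p 0) s" "\<And>l. 0 < l \<Longrightarrow> l \<le> K \<Longrightarrow> \<not> adj s (p l) \<and> \<not> adj (p l) s"
    "adj t (p K)" "adj (p K) t" "\<And>l. l < K \<Longrightarrow> \<not> adj t (p l) \<and> \<not> adj (p l) t"
    using as at st irr sym Cp sp0 tpK f1 f2 by blast+
  have adjs2: "\<And>l. l \<le> K \<Longrightarrow> adj s (p l) = (l = 0) \<and> adj (p l) s = (l = 0)"
    "\<And>l. l \<le> K \<Longrightarrow> adj t (p l) = (K = l) \<and> adj (p l) t = (K = l)"
    using adjs by (metis gr0I, metis le_neq_implies_less)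
  have "cyc adj w m"
    unfolding cyc_def
  proof (intro conjI)
    show "4 \<le> m" unfolding m_def by simp
    show "inj_on w {..<m}"
    proof (rule inj_onI)
      fix i j assume "i \<in> {..<m}" "j \<in> {..<m}" and e: "w i = w j"
      then have i: "i = 0 \<or> i = 1 \<or> (\<exists>l\<le>K. i = l + 2) \<or> i = K + 3"
        and j: "j = 0 \<or> j = 1 \<or> (\<exists>l\<le>K. j = l + 2) \<or> j = K + 3" using wcases by auto
      from i j e show "i = j"
        apply (elim disjE exE conjE)
        apply (simp_all only: w0 w1 wt wl)
        using as2 st(1) by (auto simp: pinj dest!: pd)
    qed
    show "\<forall>i<m. \<forall>j<m. adj (w i) (w j) \<longleftrightarrow> (j = i + 1 \<or> i = j + 1 \<or> (i = 0 \<and> j = m - 1) \<or> (j = 0 \<and> i = m - 1))"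
    proof (intro allI impI)
      fix i j assume "i < m" "j < m"
      then have i: "i = 0 \<or> i = 1 \<or> (\<exists>l\<le>K. i = l + 2) \<or> i = K + 3"
        and j: "j = 0 \<or> j = 1 \<or> (\<exists>l\<le>K. j = l + 2) \<or> j = K + 3" using wcases by auto
      from i j show "adj (w i) (w j) \<longleftrightarrow> (j = i + 1 \<or> i = j + 1 \<or> (i = 0 \<and> j = m - 1) \<or> (j = 0 \<and> i = m - 1))"
        apply (elim disjE exE conjE)
        apply (simp_all only: w0 w1 wt wl)
        using adjs adjs2 padj
        by (simp_all add: m_def)
    qed
  qed
  with nocyc show False by blast
qed


lemma rtranclp_sym:
  assumes "\<And>x y. r x y \<Longrightarrow> r y x" "r\<^sup>*\<^sup>* x y"
  shows "r\<^sup>*\<^sup>* y x"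
  using assms(2)
proof (induction rule: rtranclp_induct)
  case base then show ?case by simp
next
  case (step y z)
  then show ?case using assms(1) by (meson converse_rtranclp_into_rtranclp)
qed

lemma P_step:
  assumes "finite V" "a \<in> V" "b \<in> V" "b \<noteq> a" "\<not> adj a b"
  shows "\<exists>c\<in>V. c \<noteq> a \<and> \<not> adj a c \<and> simpl adj V c"
  using assms
proof (induction "card V" arbitrary: V a b rule: less_induct)
  case less
  note fin = less.prems(1) and aV = less.prems(2) and bV = less.prems(3)
    and ba = less.prems(4) and nab = less.prems(5)
  define N where "N = {v\<in>V. adj a v}"
  define R where "R = V - N - {a}"
  define Radj where "Radj x y \<longleftrightarrow> adj x y \<and> x \<in> R \<and> y \<in> R" for x y
  define C where "C = {v. Radj\<^sup>*\<^sup>* b v}"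
  define S where "S = {s\<in>N. \<exists>c\<in>C. adj s c}"
  define V' where "V' = C \<union> S"
  have bR: "b \<in> R" unfolding R_def N_def using bV ba nab by auto
  have CR: "C \<subseteq> R"
  proof
    fix x assume "x \<in> C"
    then have "Radj\<^sup>*\<^sup>* b x" unfolding C_def by simp
    then show "x \<in> R"
    proof (induction rule: rtranclp_induct)
      case base show ?case using bR .
    next
      case (step y z) then show ?case unfolding Radj_def by blast
    qed
  qed
  have bC: "b \<in> C" unfolding C_def by simp
  have Cclosed: "y \<in> C" if "c \<in> C" "y \<in> R" "adj c y" for c y
  proof -
    have "Radj c y" unfolding Radj_def using that CR by auto
    then show ?thesis using that(1) unfolding C_def by auto
  qed
  have nbr: "y \<in> V'" if "c \<in> C" "y \<in> V" "adj c y" for c y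
  proof -
    have "c \<in> R" using that CR by auto
    then have "y \<noteq> a" using that sym[of c y] unfolding R_def N_def by auto
    show ?thesis
    proof (cases "y \<in> N")
      case True then show ?thesis using that sym[OF that(3)] unfolding V'_def S_def by auto
    next
      case False then have "y \<in> R" unfolding R_def using \<open>y \<noteq> a\<close> that by auto
      then show ?thesis using Cclosed that unfolding V'_def by auto
    qed
  qed
  have V'V: "V' \<subseteq> V - {a}" unfolding V'_def S_def N_def using CR unfolding R_def N_def by auto
  then have "V' \<subset> V" using aV by blast
  then have cardV': "card V' < card V" using fin by (rule psubset_card_mono[rotated])
  have finV': "finite V'" using V'V fin finite_subset by blast
  have Cconn: "Radj\<^sup>*\<^sup>* c1 c2" if "c1 \<in> C" "c2 \<in> C" for c1 c2
  proof -
    have h1: "Radj\<^sup>*\<^sup>* b c1" using that(1) unfolding C_def by simp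
    have h2: "\<And>x y. Radj x y \<Longrightarrow> Radj y x" unfolding Radj_def using sym by blast
    have "Radj\<^sup>*\<^sup>* c1 b" using rtranclp_sym[OF h2 h1] .
    then show ?thesis using that(2) unfolding C_def by auto
  qed
  have clique: "adj s t" if st: "s \<in> S" "t \<in> S" "s \<noteq> t" for s t
  proof (rule ccontr)
    assume nst: "\<not> adj s t"
    obtain c1 c2 where c1: "c1 \<in> C" "adj s c1" and c2: "c2 \<in> C" "adj t c2"
      using st(1,2) unfolding S_def by blast
    obtain k p where p: "p 0 = c1" "p k = c2" "\<forall>i<k. Radj (p i) (p (Suc i))"
      using rtranclp_path[OF Cconn[OF c1(1) c2(1)]] by blast
    have pC: "p i \<in> C" if "i \<le> k" for i
      using that
    proof (induction i)
      case 0 then show ?case using p c1 by simp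
    next
      case (Suc i)
      then have "Radj (p i) (p (Suc i))" using p by simp
      then show ?case using Suc Cclosed unfolding Radj_def by simp
    qed
    have pa: "\<forall>i<k. adj (p i) (p (Suc i))" using p(3) unfolding Radj_def by blast
    have P: "pathP C s t k p" unfolding pathP_def using pC pa p(1,2) c1 c2 by blast
    have CC: "\<forall>c\<in>C. \<not> adj a c \<and> c \<noteq> a \<and> c \<noteq> s \<and> c \<noteq> t"
      using CR st(1,2) unfolding R_def S_def N_def by blast
    have as: "adj a s" and at: "adj a t" using st(1,2) unfolding S_def N_def by blast+
    show False using no_path[OF as at st(3) nst CC P] .
  qed
  have lift: "simpl adj V c" if "c \<in> C" "simpl adj V' c" for c
    unfolding simpl_def
  proof (intro conjI ballI impI)
    show "c \<in> V" using that CR unfolding R_def by auto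
    fix y z assume "y \<in> V" "z \<in> V" "adj c y" "adj c z" "y \<noteq> z"
    then have "y \<in> V'" "z \<in> V'" using nbr that by auto
    then show "adj y z" using that \<open>adj c y\<close> \<open>adj c z\<close> \<open>y \<noteq> z\<close> unfolding simpl_def by blast
  qed
  have goodC: "c \<noteq> a \<and> \<not> adj a c" if "c \<in> C" for c
    using that CR unfolding R_def N_def by auto
  have CV: "C \<subseteq> V" using CR unfolding R_def by auto
  show ?case
  proof (cases "\<forall>x\<in>V'. \<forall>y\<in>V'. x \<noteq> y \<longrightarrow> adj x y")
    case True
    have "simpl adj V' b" unfolding simpl_def
    proof (intro conjI ballI impI)
      show "b \<in> V'" using bC unfolding V'_def by blast
      fix y z assume "y \<in> V'" "z \<in> V'" "y \<noteq> z"
      then show "adj y z" using True by blast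
    qed
    then have "simpl adj V b" using lift bC by blast
    moreover have "b \<in> V" using bV .
    ultimately show ?thesis using goodC[OF bC] by blast
  next
    case False
    then obtain x y where xy: "x \<in> V'" "y \<in> V'" "x \<noteq> y" "\<not> adj x y" by blast
    show ?thesis
    proof (cases "\<exists>s\<in>S. \<exists>y\<in>V'. y \<noteq> s \<and> \<not> adj s y")
      case True
      then obtain s y where sy: "s \<in> S" "y \<in> V'" "y \<noteq> s" "\<not> adj s y" by blast
      have "s \<in> V'" using sy unfolding V'_def by blast
      from less.hyps[OF cardV' finV' this sy(2,3,4)]
      obtain c where c: "c \<in> V'" "c \<noteq> s" "\<not> adj s c" "simpl adj V' c" by blast
      have "c \<notin> S" using c(2,3) clique[OF sy(1)] by blast
      then have cC: "c \<in> C" using c(1) unfolding V'_def by blast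
      have "simpl adj V c" using lift[OF cC c(4)] .
      then show ?thesis using goodC[OF cC] CV cC by blast
    next
      case False
      have yx: "y \<noteq> x" using xy(3) by simp
      from less.hyps[OF cardV' finV' xy(1) xy(2) yx xy(4)]
      obtain c where c: "c \<in> V'" "c \<noteq> x" "\<not> adj x c" "simpl adj V' c" by blast
      have "c \<notin> S"
      proof
        assume "c \<in> S"
        have uni: "\<forall>s\<in>S. \<forall>y\<in>V'. y \<noteq> s \<longrightarrow> adj s y" using False by blast
        have "x \<noteq> c" using c(2) by simp
        then have "adj c x" using uni \<open>c \<in> S\<close> xy(1) by simp
        then show False using sym c(3) by blast
      qed
      then have cC: "c \<in> C" using c(1) unfolding V'_def by blast
      have "simpl adj V c" using lift[OF cC c(4)] .
      then show ?thesis using goodC[OF cC] CV cC by blast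
    qed
  qed
qed

lemma exists_simpl:
  assumes "finite V" "V \<noteq> {}"
  shows "\<exists>x. simpl adj V x"
proof (cases "\<exists>a\<in>V. \<exists>b\<in>V. b \<noteq> a \<and> \<not> adj a b")
  case True
  then obtain a b where ab: "a \<in> V" "b \<in> V" "b \<noteq> a" "\<not> adj a b" by blast
  from P_step[OF assms(1) ab] show ?thesis by blast
next
  case False
  then have all: "\<forall>a\<in>V. \<forall>b\<in>V. b \<noteq> a \<longrightarrow> adj a b" by blast
  obtain a where "a \<in> V" using assms by auto
  have "simpl adj V a" unfolding simpl_def
  proof (intro conjI ballI impI)
    show "a \<in> V" by fact
    fix y z assume "y \<in> V" "z \<in> V" "y \<noteq> z"
    then show "adj y z" using all by simp
  qed
  then show ?thesis by blast
qed

lemma peo: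
  assumes "finite V"
  shows "\<exists>L. distinct L \<and> set L = V \<and> (\<forall>i<length L. simpl adj (set (drop i L)) (L ! i))"
  using assms
proof (induction "card V" arbitrary: V rule: less_induct)
  case less
  show ?case
  proof (cases "V = {}")
    case True then show ?thesis by (intro exI[of _ "[]"]) auto
  next
    case False
    then obtain x where x: "simpl adj V x" using exists_simpl less.prems by blast
    then have xV: "x \<in> V" unfolding simpl_def by auto
    then have "card (V - {x}) < card V" using less.prems by (meson card_Diff1_less)
    from less.hyps[OF this] less.prems obtain L where
      L: "distinct L" "set L = V - {x}" "\<forall>i<length L. simpl adj (set (drop i L)) (L ! i)" by auto
    show ?thesis
    proof (intro exI[of _ "x # L"] conjI allI impI)
      show "distinct (x # L)" using L by auto
      show "set (x # L) = V" using L xV by auto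
      fix i assume "i < length (x # L)"
      then show "simpl adj (set (drop i (x # L))) ((x # L) ! i)"
        using L x xV by (cases i) (auto simp: insert_absorb)
    qed
  qed
qed

end



definition ind :: "nat set \<Rightarrow> monomial" where
  "ind S = (\<lambda>i. if i \<in> S then 1 else 0)"

lemma mdeg_ind: "S \<subseteq> {1..n} \<Longrightarrow> mdeg n (ind S) = card S"
  unfolding mdeg_def ind_def
  by (simp add: sum.If_cases Int_absorb1)

lemma ind_monomials: "S \<subseteq> {1..n} \<Longrightarrow> ind S \<in> monomials n"
  unfolding monomials_def ind_def by auto

lemma ind_mono: "S \<subseteq> T \<Longrightarrow> ind S \<le> ind T"
  unfolding ind_def le_fun_def by auto

lemma kdiff_app:
  "kdiff n c (u, G) = (\<Sum>k\<in>{1..n} - G. if 1 \<le> u k then (-1) ^ card {l\<in>G. l < k} * c (u(k := u k - 1), insert k G) else 0)"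
  by (simp add: kdiff_def)

lemma kdiff_ind:
  assumes "W \<subseteq> {1..n}" "G \<subseteq> W"
  shows "kdiff n b (ind (W - G), G) = (\<Sum>k\<in>W - G. (-1) ^ card {l\<in>G. l < k} * b (ind (W - insert k G), insert k G))"
  unfolding kdiff_app
proof (rule sum.mono_neutral_cong_right)
  show "finite ({1..n} - G)" by simp
  show "W - G \<subseteq> {1..n} - G" using assms by auto
  show "\<forall>i\<in>{1..n} - G - (W - G). (if 1 \<le> ind (W - G) i then (-1) ^ card {l \<in> G. l < i} * b ((ind (W - G))(i := ind (W - G) i - 1), insert i G) else 0) = 0"
    by (auto simp: ind_def)
  fix k assume k: "k \<in> W - G"
  have "(ind (W - G))(k := ind (W - G) k - 1) = ind (W - insert k G)"
    using k by (auto simp: ind_def fun_eq_iff)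
  then show "(if 1 \<le> ind (W - G) k then (-1) ^ card {l \<in> G. l < k} * b ((ind (W - G))(k := ind (W - G) k - 1), insert k G) else 0) =
    (-1) ^ card {l \<in> G. l < k} * b (ind (W - insert k G), insert k G)"
    using k by (simp add: ind_def)
qed

lemma adj_sum:
  fixes phi :: "nat set \<Rightarrow> 'k::field"
  assumes "finite W"
  shows "(\<Sum>G\<in>Pow W. phi G * (\<Sum>k\<in>W - G. (-1) ^ card {l\<in>G. l < k} * b (ind (W - insert k G), insert k G)))
       = (\<Sum>F\<in>Pow W. b (ind (W - F), F) * (\<Sum>k\<in>F. (-1) ^ card {l\<in>F - {k}. l < k} * phi (F - {k})))"
proof -
  have "(\<Sum>G\<in>Pow W. phi G * (\<Sum>k\<in>W - G. (-1) ^ card {l\<in>G. l < k} * b (ind (W - insert k G), insert k G)))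
      = (\<Sum>(G,k)\<in>Sigma (Pow W) (\<lambda>G. W - G). phi G * ((-1) ^ card {l\<in>G. l < k} * b (ind (W - insert k G), insert k G)))"
    by (subst sum.Sigma[symmetric]) (auto simp: sum_distrib_left assms intro: finite_subset)
  also have "\<dots> = (\<Sum>(F,k)\<in>Sigma (Pow W) (\<lambda>F. F). b (ind (W - F), F) * ((-1) ^ card {l\<in>F - {k}. l < k} * phi (F - {k})))"
    apply (rule sum.reindex_bij_witness[where i = "\<lambda>(F,k). (F - {k}, k)" and j = "\<lambda>(G,k). (insert k G, k)"])
    subgoal for a by (cases a) auto
    subgoal for a by (cases a) auto
    subgoal for a by (cases a) (auto simp: insert_absorb)
    subgoal for a by (cases a) auto
    subgoal premises prems for a
    proof (cases a)
      case (Pair G k)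
      then have "k \<notin> G" using prems by auto
      then have e: "insert k G - {k} = G" by auto
      show ?thesis unfolding Pair by (simp only: prod.case e mult.commute mult.left_commute)
    qed
    done
  also have "\<dots> = (\<Sum>F\<in>Pow W. b (ind (W - F), F) * (\<Sum>k\<in>F. (-1) ^ card {l\<in>F - {k}. l < k} * phi (F - {k})))"
    by (subst sum.Sigma[symmetric]) (auto simp: sum_distrib_left assms intro: finite_subset)
  finally show ?thesis .
qed

lemma invol_sum:
  fixes T :: "nat \<times> nat \<Rightarrow> 'k::field"
  assumes "finite P" "\<And>k l. (k, l) \<in> P \<Longrightarrow> (l, k) \<in> P \<and> k \<noteq> l \<and> T (l, k) = - T (k, l)"
  shows "sum T P = 0"
proof -
  have Psym: "\<And>k l. (k, l) \<in> P \<Longrightarrow> (l, k) \<in> P" and Pne: "\<And>k l. (k, l) \<in> P \<Longrightarrow> k \<noteq> l"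
    and Tn: "\<And>k l. (k, l) \<in> P \<Longrightarrow> T (l, k) = - T (k, l)" using assms(2) by blast+
  define P1 where "P1 = {(k, l)\<in>P. k < l}"
  define P2 where "P2 = {(k, l)\<in>P. l < k}"
  have PU: "P = P1 \<union> P2" unfolding P1_def P2_def using Pne by (auto simp: neq_iff)
  have disj: "P1 \<inter> P2 = {}" unfolding P1_def P2_def by auto
  have fin: "finite P1" "finite P2"
    by (rule finite_subset[OF _ assms(1)], auto simp: P1_def P2_def)+
  have "sum T P2 = sum (T \<circ> prod.swap) P1"
    apply (rule sum.reindex_bij_witness[where i = prod.swap and j = prod.swap])
    subgoal for a by (cases a) simp
    subgoal for a unfolding P1_def P2_def using Psym by (cases a) auto
    subgoal for a by (cases a) simp
    subgoal for a unfolding P1_def P2_def using Psym by (cases a) auto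
    subgoal for a by (cases a) simp
    done
  also have "\<dots> = sum (\<lambda>x. - T x) P1"
  proof (rule sum.cong)
    fix x assume "x \<in> P1"
    then show "(T \<circ> prod.swap) x = - T x" unfolding P1_def using Tn by (cases x) auto
  qed simp
  also have "\<dots> = - sum T P1" by (simp add: sum_negf)
  finally show ?thesis using PU disj fin by (simp add: sum.union_disjoint)
qed


lemma sign_ins:
  fixes k l :: nat and G :: "nat set"
  assumes "k \<notin> G" "k < l"
  shows "((-1::'k::field) ^ card {x\<in>insert k G. x < l}) = - ((-1) ^ card {x\<in>G. x < l})"
    and "((-1::'k::field) ^ card {x\<in>insert l G. x < k}) = ((-1) ^ card {x\<in>G. x < k})"
proof -
  have "{x\<in>insert k G. x < l} = insert k {x\<in>G. x < l}" using assms by auto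
  moreover have "finite {x\<in>G. x < l}" by (rule finite_subset[of _ "{..<l}"]) auto
  ultimately have "card {x\<in>insert k G. x < l} = Suc (card {x\<in>G. x < l})" using assms by simp
  then show "((-1::'k::field) ^ card {x\<in>insert k G. x < l}) = - ((-1) ^ card {x\<in>G. x < l})" by simp
  have "{x\<in>insert l G. x < k} = {x\<in>G. x < k}" using assms by auto
  then show "((-1::'k::field) ^ card {x\<in>insert l G. x < k}) = ((-1) ^ card {x\<in>G. x < k})" by simp
qed

lemma sign_swap:
  fixes k l :: nat and G :: "nat set"
  assumes "k \<notin> G" "l \<notin> G" "k \<noteq> l"
  shows "((-1::'k::field) ^ card {x\<in>G. x < k}) * (-1) ^ card {x\<in>insert k G. x < l}
       = - (((-1) ^ card {x\<in>G. x < l}) * (-1) ^ card {x\<in>insert l G. x < k})"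
proof (cases "k < l")
  case True
  show ?thesis using sign_ins[OF assms(1) True, where 'k='k] by simp
next
  case False
  then have "l < k" using assms(3) by simp
  show ?thesis using sign_ins[OF assms(2) \<open>l < k\<close>, where 'k='k] by simp
qed

lemma kdiff_kdiff: "kdiff n (kdiff n (c :: monomial \<times> nat set \<Rightarrow> 'k::field)) = (\<lambda>_. 0)"
proof (rule ext, clarify)
  fix u G
  define A where "A = {1..n} - G"
  define e :: "nat \<Rightarrow> nat set \<Rightarrow> 'k" where "e k H = (-1) ^ card {l\<in>H. l < k}" for k H
  define T where "T = (\<lambda>(k,l). e k G * e l (insert k G) * c ((u(k := u k - 1))(l := u l - 1), insert l (insert k G)))"
  define P where "P = {(k,l). k \<in> A \<and> l \<in> A \<and> k \<noteq> l \<and> 1 \<le> u k \<and> 1 \<le> u l}"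
  have finA: "finite A" unfolding A_def by simp
  have inner: "kdiff n c (u(k := u k - 1), insert k G) =
      (\<Sum>l\<in>A. if (k,l) \<in> P then e l (insert k G) * c ((u(k := u k - 1))(l := u l - 1), insert l (insert k G)) else 0)"
    if k: "k \<in> A" "1 \<le> u k" for k
    unfolding kdiff_app
  proof (rule sum.mono_neutral_cong_left)
    show "finite A" by fact
    show "{1..n} - insert k G \<subseteq> A" unfolding A_def by auto
    show "\<forall>i\<in>A - ({1..n} - insert k G). (if (k, i) \<in> P then e i (insert k G) * c ((u(k := u k - 1))(i := u i - 1), insert i (insert k G)) else 0) = 0"
      unfolding A_def P_def by auto
    fix l assume l: "l \<in> {1..n} - insert k G"
    then have "l \<noteq> k" by auto
    then show "(if 1 \<le> (u(k := u k - 1)) l then (-1) ^ card {x \<in> insert k G. x < l} * c ((u(k := u k - 1))(l := (u(k := u k - 1)) l - 1), insert l (insert k G)) else 0) =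
      (if (k, l) \<in> P then e l (insert k G) * c ((u(k := u k - 1))(l := u l - 1), insert l (insert k G)) else 0)"
      using l k unfolding P_def A_def e_def by auto
  qed
  have "kdiff n (kdiff n c) (u, G) = (\<Sum>k\<in>A. \<Sum>l\<in>A. if (k,l) \<in> P then T (k,l) else 0)"
    unfolding kdiff_app[of n "kdiff n c"] A_def[symmetric]
  proof (rule sum.cong[OF refl])
    fix k assume k: "k \<in> A"
    show "(if 1 \<le> u k then (-1) ^ card {l \<in> G. l < k} * kdiff n c (u(k := u k - 1), insert k G) else 0) =
        (\<Sum>l\<in>A. if (k, l) \<in> P then T (k, l) else 0)"
    proof (cases "1 \<le> u k")
      case True
      show ?thesis using True inner[OF k True]
        by (simp add: sum_distrib_left T_def e_def mult.assoc if_distrib cong: if_cong)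
    next
      case False
      then show ?thesis unfolding P_def by simp
    qed
  qed
  also have "\<dots> = (\<Sum>p\<in>A \<times> A. if p \<in> P then T p else 0)"
    by (simp add: sum.cartesian_product)
  also have "\<dots> = sum T P"
  proof -
    have "P \<subseteq> A \<times> A" unfolding P_def by auto
    then show ?thesis using finA by (simp add: sum.If_cases Int_absorb1)
  qed
  also have "\<dots> = 0"
  proof (rule invol_sum)
    show "finite P" by (rule finite_subset[OF _ finite_cartesian_product[OF finA finA]]) (auto simp: P_def)
    fix k l assume kl: "(k, l) \<in> P"
    then have k: "k \<notin> G" "l \<notin> G" "k \<noteq> l" unfolding P_def A_def by auto
    have "(u(k := u k - 1))(l := u l - 1) = (u(l := u l - 1))(k := u k - 1)"
      using k(3) by (rule fun_upd_twist)
    moreover have "insert l (insert k G) = insert k (insert l G)" by auto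
    moreover have "e k G * e l (insert k G) = - (e l G * e k (insert l G))"
      unfolding e_def by (rule sign_swap[OF k])
    ultimately show "(l, k) \<in> P \<and> k \<noteq> l \<and> T (l, k) = - T (k, l)"
      using kl k unfolding T_def P_def by auto
  qed
  finally show "kdiff n (kdiff n c) (u, G) = 0" .
qed


lemma triA: "1 \<le> (i::nat) \<Longrightarrow> \<kappa> \<noteq> 0 \<Longrightarrow> \<kappa> \<noteq> 1 \<Longrightarrow> ({\<kappa>,0,1} = {0,i,Suc i}) \<longleftrightarrow> (i = 1 \<and> \<kappa> = 2)"
proof
  assume a: "1 \<le> i" "\<kappa> \<noteq> 0" "\<kappa> \<noteq> 1" and E: "{\<kappa>,0,1} = {0,i,Suc i}"
  have "i \<in> {\<kappa>,0,1}" "Suc i \<in> {\<kappa>,0,1}" unfolding E by simp_all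
  then show "i = 1 \<and> \<kappa> = 2" using a by auto
qed auto

lemma triB: "1 \<le> (j::nat) \<Longrightarrow> 1 \<le> i \<Longrightarrow> \<kappa> \<noteq> 0 \<Longrightarrow> \<kappa> \<noteq> Suc j \<Longrightarrow>
   ({\<kappa>,0,Suc j} = {0,i,Suc i}) \<longleftrightarrow> ((i = j \<and> \<kappa> = j) \<or> (i = Suc j \<and> \<kappa> = Suc (Suc j)))"
proof
  assume a: "1 \<le> j" "1 \<le> i" "\<kappa> \<noteq> 0" "\<kappa> \<noteq> Suc j" and E: "{\<kappa>,0,Suc j} = {0,i,Suc i}"
  have "i \<in> {\<kappa>,0,Suc j}" "Suc i \<in> {\<kappa>,0,Suc j}" unfolding E by simp_all
  moreover have "\<kappa> \<in> {0,i,Suc i}" "Suc j \<in> {0,i,Suc i}" unfolding E[symmetric] by simp_all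
  ultimately show "(i = j \<and> \<kappa> = j) \<or> (i = Suc j \<and> \<kappa> = Suc (Suc j))" using a by auto
next
  assume "(i = j \<and> \<kappa> = j) \<or> (i = Suc j \<and> \<kappa> = Suc (Suc j))"
  then show "{\<kappa>,0,Suc j} = {0,i,Suc i}" by auto
qed

lemma triC: "(\<alpha>::nat) \<noteq> 0 \<Longrightarrow> \<beta> \<noteq> 0 \<Longrightarrow> \<alpha> \<noteq> \<beta> \<Longrightarrow> {\<kappa>,\<alpha>,\<beta>} = {0,i,Suc i} \<Longrightarrow> (\<beta> = \<alpha>+1 \<or> \<alpha> = \<beta>+1)"
proof -
  assume a: "\<alpha> \<noteq> 0" "\<beta> \<noteq> 0" "\<alpha> \<noteq> \<beta>" and E: "{\<kappa>,\<alpha>,\<beta>} = {0,i,Suc i}"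
  have "\<alpha> \<in> {0,i,Suc i}" "\<beta> \<in> {0,i,Suc i}" unfolding E[symmetric] by simp_all
  then show ?thesis using a by auto
qed

fun xs :: "(nat \<Rightarrow> 'k::field) \<Rightarrow> nat \<Rightarrow> 'k" where
  "xs g 0 = 1" | "xs g (Suc 0) = 1" | "xs g (Suc (Suc i)) = g (Suc i) * xs g (Suc i)"

lemma sq_sign: "((-1::'k::field) ^ a) * (-1) ^ a = 1"
  by (induct a) auto

definition Hadj :: "nat \<Rightarrow> monomial set \<Rightarrow> nat \<Rightarrow> nat \<Rightarrow> bool" where
  "Hadj n I p q \<longleftrightarrow> p \<noteq> q \<and> p \<in> {1..n} \<and> q \<in> {1..n} \<and> ind {p, q} \<notin> I"

lemma sum_if_eq: "finite A \<Longrightarrow> a \<in> A \<Longrightarrow> (\<Sum>x\<in>A. if x = a then f x else 0) = f a"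
  by (simp add: sum.delta)

lemma no_cycle:
  fixes I :: "monomial set"
  assumes mono: "is_monomial_ideal n I"
    and lin: "has_linear_resolution TYPE('k::field) 2 n I"
    and cy: "cyc (Hadj n I) w m"
  shows False
proof -
  define cons where "cons i j \<longleftrightarrow> (j = i+1 \<or> i = j+1 \<or> (i=0 \<and> j=m-1) \<or> (j=0 \<and> i=m-1))" for i j
  have m4: "4 \<le> m" and inj: "inj_on w {..<m}"
    and adjc: "\<And>i j. i<m \<Longrightarrow> j<m \<Longrightarrow> Hadj n I (w i) (w j) \<longleftrightarrow> cons i j"
    using cy unfolding cyc_def cons_def by auto
  have wn: "w i \<in> {1..n}" if "i < m" for i
  proof (cases "i + 1 < m")
    case True then have "Hadj n I (w i) (w (i+1))" using adjc[of i "i+1"] that cons_def by simp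
    then show ?thesis unfolding Hadj_def by simp
  next
    case False then have "i = m-1" using that by simp
    then have "Hadj n I (w i) (w 0)" using adjc[of i 0] that cons_def m4 by simp
    then show ?thesis unfolding Hadj_def by simp
  qed
  define W where "W = w ` {..<m}"
  have WS: "W \<subseteq> {1..n}" using wn unfolding W_def by auto
  have finW: "finite W" unfolding W_def by simp
  have cardW: "card W = m" unfolding W_def using inj by (simp add: card_image)
  have weq: "w i = w j \<longleftrightarrow> i = j" if "i<m" "j<m" for i j
    using inj that by (auto dest: inj_onD)
  have Imono: "ind S \<in> I" if "S \<subseteq> {1..n}" "T \<subseteq> S" "ind T \<in> I" for S T
    using mono that ind_monomials[OF that(1)] ind_mono[OF that(2)] unfolding is_monomial_ideal_def by blast
  have Gedge: "ind {w i, w j} \<in> I" if "i<m" "j<m" "i\<noteq>j" "\<not> cons i j" for i j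
  proof -
    have "\<not> Hadj n I (w i) (w j)" using adjc that by simp
    moreover have "w i \<noteq> w j" using weq that by simp
    ultimately show ?thesis using wn that unfolding Hadj_def by auto
  qed
  have Hedge: "\<not> cons i j" if "i<m" "j<m" "ind {w i, w j} \<in> I" for i j
    using adjc[OF that(1,2)] that(3) unfolding Hadj_def by auto
  define e :: "nat \<Rightarrow> nat set \<Rightarrow> 'k" where "e k H = (-1) ^ card {l\<in>H. l < k}" for k H
  define z where "z = (ind {w 0, w 1}, W - {w 0, w 1})"
  define dz :: "monomial \<times> nat set \<Rightarrow> 'k" where "dz x = (if x = z then 1 else 0)" for x
  define c where "c = kdiff n dz"
  have supp_c: "supported_on c (kbasis n I (m-3) m)"
    unfolding supported_on_def
  proof (intro allI impI)
    fix y assume ny: "y \<notin> kbasis n I (m-3) m"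
    obtain u G where y: "y = (u, G)" by (cases y)
    show "c y = 0"
    proof (rule ccontr)
      assume "c y \<noteq> 0"
      then have "(\<Sum>k\<in>{1..n}-G. if 1 \<le> u k then (-1) ^ card {l\<in>G. l < k} * dz (u(k := u k - 1), insert k G) else 0) \<noteq> 0"
        unfolding c_def y kdiff_app .
      then obtain k where k: "k \<in> {1..n} - G"
        "(if 1 \<le> u k then (-1) ^ card {l\<in>G. l < k} * dz (u(k := u k - 1), insert k G) else 0) \<noteq> 0"
        using sum.not_neutral_contains_not_neutral by blast
      then have uk: "1 \<le> u k" and zz: "(u(k := u k - 1), insert k G) = z"
        by (auto simp: dz_def split: if_splits)
      then have u1: "u(k := u k - 1) = ind {w 0, w 1}" and G1: "insert k G = W - {w 0, w 1}"
        unfolding z_def by auto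
      have kG: "k \<notin> G" using k by auto
      have kW: "k \<in> W - {w 0, w 1}" using G1 by auto
      then obtain \<kappa> where ka: "\<kappa> < m" "k = w \<kappa>" "\<kappa> \<noteq> 0" "\<kappa> \<noteq> 1" unfolding W_def by auto
      have Geq: "G = W - {w 0, w 1, k}" using G1 kG by auto
      have ueq: "u = ind {w 0, w 1, k}"
      proof
        fix i show "u i = ind {w 0, w 1, k} i"
        proof (cases "i = k")
          case True
          have "(u(k := u k - 1)) k = ind {w 0, w 1} k" using u1 by simp
          then have "u k - 1 = 0" using kW unfolding ind_def by auto
          then show ?thesis using True uk unfolding ind_def by simp
        next
          case False
          have "(u(k := u k - 1)) i = ind {w 0, w 1} i" using u1 by simp
          then show ?thesis using False unfolding ind_def by simp
        qed
      qed
      have S3W: "{w 0, w 1, k} \<subseteq> W" using kW m4 unfolding W_def by auto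
      have S3: "{w 0, w 1, k} \<subseteq> {1..n}" using S3W WS by auto
      have uI: "u \<in> I"
      proof (cases "\<kappa> = 2")
        case True
        have "ind {w 0, w 2} \<in> I" using Gedge[of 0 2] m4 unfolding cons_def by simp
        moreover have "{w 0, w 2} \<subseteq> {w 0, w 1, k}" using True ka(2) by auto
        ultimately show ?thesis unfolding ueq using Imono[OF S3] by blast
      next
        case False
        have "ind {w 1, w \<kappa>} \<in> I" using Gedge[of 1 \<kappa>] ka False m4 unfolding cons_def by auto
        moreover have "{w 1, w \<kappa>} \<subseteq> {w 0, w 1, k}" using ka(2) by auto
        ultimately show ?thesis unfolding ueq using Imono[OF S3] by blast
      qed
      have c3: "card {w 0, w 1, k} = 3" using weq[of 0 1] weq[of 0 \<kappa>] weq[of 1 \<kappa>] ka m4 by auto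
      have cG: "card G = m - 3" unfolding Geq using card_Diff_subset[OF _ S3W] c3 cardW by simp
      have mu: "mdeg n u = 3" unfolding ueq using mdeg_ind[OF S3] c3 by simp
      have GS: "G \<subseteq> {1..n}" using Geq WS by auto
      have "y \<in> kbasis n I (m-3) m" unfolding kbasis_def y using uI GS cG mu m4 by simp
      with ny show False by simp
    qed
  qed
  have cyc_c: "kdiff n c = (\<lambda>_. 0)" unfolding c_def by (rule kdiff_kdiff)
  have "m \<noteq> (m - 3) + 2" using m4 by simp
  with lin supp_c cyc_c obtain b :: "monomial \<times> nat set \<Rightarrow> 'k"
    where bsupp: "supported_on b (kbasis n I (m - 3 + 1) m)" and bd: "kdiff n b = c"
    unfolding has_linear_resolution_def by blast
  have m31: "m - 3 + 1 = m - 2" using m4 by simp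
  define L where "L i = e (w i) (W - w ` {0, i, Suc i})" for i
  define U where "U i = e (w (Suc i)) (W - w ` {0, i, Suc i})" for i
  define g where "g i = - L i * U (Suc i)" for i
  define x where "x = xs g"
  define phi where "phi G = (\<Sum>i\<in>{1..m-2}. if G = W - w ` {0, i, Suc i} then x i else 0)" for G
  define psi where "psi F = (\<Sum>k\<in>F. e k (F - {k}) * phi (F - {k}))" for F
  have key: "(\<Sum>G\<in>Pow W. phi G * kdiff n b' (ind (W - G), G)) = (\<Sum>F\<in>Pow W. b' (ind (W - F), F) * psi F)" for b'
  proof -
    have "(\<Sum>G\<in>Pow W. phi G * kdiff n b' (ind (W - G), G)) =
        (\<Sum>G\<in>Pow W. phi G * (\<Sum>k\<in>W - G. (-1) ^ card {l\<in>G. l < k} * b' (ind (W - insert k G), insert k G)))"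
      by (rule sum.cong[OF refl]) (simp add: kdiff_ind[OF WS])
    also have "\<dots> = (\<Sum>F\<in>Pow W. b' (ind (W - F), F) * psi F)"
      unfolding adj_sum[OF finW] psi_def e_def ..
    finally show ?thesis .
  qed
  have psi_idx: "psi (W - w ` Q) = (\<Sum>\<kappa>\<in>{..<m} - Q. e (w \<kappa>) (W - w ` (insert \<kappa> Q)) *
       (\<Sum>i\<in>{1..m-2}. if insert \<kappa> Q = {0, i, Suc i} then x i else 0))" if Q: "Q \<subseteq> {..<m}" for Q
  proof -
    have img: "W - w ` Q = w ` ({..<m} - Q)" unfolding W_def using Q inj by (simp add: inj_on_image_set_diff)
    have inj2: "inj_on w ({..<m} - Q)" using inj by (rule inj_on_subset) auto
    have phiX: "phi (W - w ` X) = (\<Sum>i\<in>{1..m-2}. if X = {0, i, Suc i} then x i else 0)" if X: "X \<subseteq> {..<m}" for X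
      unfolding phi_def
    proof (rule sum.cong[OF refl])
      fix i assume i: "i \<in> {1..m-2}"
      then have Y: "{0, i, Suc i} \<subseteq> {..<m}" using m4 by auto
      have A: "w ` X \<subseteq> W" "w ` {0, i, Suc i} \<subseteq> W" using X Y unfolding W_def by auto
      have "(W - w ` X = W - w ` {0, i, Suc i}) \<longleftrightarrow> (w ` X = w ` {0, i, Suc i})"
        using A by blast
      also have "\<dots> \<longleftrightarrow> X = {0, i, Suc i}" using inj X Y by (rule inj_on_image_eq_iff)
      finally show "(if W - w ` X = W - w ` {0, i, Suc i} then x i else 0) = (if X = {0, i, Suc i} then x i else 0)"
        by simp
    qed
    have "psi (W - w ` Q) = (\<Sum>k\<in>w ` ({..<m} - Q). e k (W - w ` Q - {k}) * phi (W - w ` Q - {k}))"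
      unfolding psi_def img ..
    also have "\<dots> = (\<Sum>\<kappa>\<in>{..<m} - Q. e (w \<kappa>) (W - w ` Q - {w \<kappa>}) * phi (W - w ` Q - {w \<kappa>}))"
      by (rule sum.reindex[OF inj2, unfolded comp_def])
    also have "\<dots> = (\<Sum>\<kappa>\<in>{..<m} - Q. e (w \<kappa>) (W - w ` (insert \<kappa> Q)) * phi (W - w ` (insert \<kappa> Q)))"
      by (rule sum.cong[OF refl]) (simp add: Diff_insert[symmetric])
    also have "\<dots> = (\<Sum>\<kappa>\<in>{..<m} - Q. e (w \<kappa>) (W - w ` (insert \<kappa> Q)) *
       (\<Sum>i\<in>{1..m-2}. if insert \<kappa> Q = {0, i, Suc i} then x i else 0))"
    proof (rule sum.cong[OF refl])
      fix \<kappa> assume "\<kappa> \<in> {..<m} - Q"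
      then have "insert \<kappa> Q \<subseteq> {..<m}" using Q by auto
      show "e (w \<kappa>) (W - w ` (insert \<kappa> Q)) * phi (W - w ` (insert \<kappa> Q)) = e (w \<kappa>) (W - w ` (insert \<kappa> Q)) *
       (\<Sum>i\<in>{1..m-2}. if insert \<kappa> Q = {0, i, Suc i} then x i else 0)"
        unfolding phiX[OF \<open>insert \<kappa> Q \<subseteq> {..<m}\<close>] ..
    qed
    finally show ?thesis .
  qed
  have psi_A: "psi (W - {w 0, w 1}) = e (w 2) (W - w ` {2, 0, 1}) * x 1"
  proof -
    have Q: "{0, 1} \<subseteq> {..<m}" using m4 by auto
    have inner: "(\<Sum>i\<in>{1..m-2}. if insert \<kappa> {0, 1} = {0, i, Suc i} then x i else 0) = (if \<kappa> = 2 then x 1 else 0)"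
      if k: "\<kappa> \<in> {..<m} - {0, 1}" for \<kappa>
    proof -
      have "(\<Sum>i\<in>{1..m-2}. if insert \<kappa> {0, 1} = {0, i, Suc i} then x i else 0)
          = (\<Sum>i\<in>{1..m-2}. if i = 1 \<and> \<kappa> = 2 then x i else 0)"
        by (rule sum.cong[OF refl]) (use k triA in auto)
      also have "\<dots> = (if \<kappa> = 2 then x 1 else 0)"
      proof (cases "\<kappa> = 2")
        case True
        have "1 \<in> {1..m-2}" using m4 by auto
        then show ?thesis using True by (simp add: sum.delta)
      next
        case False then show ?thesis by simp
      qed
      finally show ?thesis .
    qed
    have "psi (W - {w 0, w 1}) = psi (W - w ` {0, 1})" by simp
    also have "\<dots> = (\<Sum>\<kappa>\<in>{..<m} - {0, 1}. e (w \<kappa>) (W - w ` (insert \<kappa> {0, 1})) *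
       (\<Sum>i\<in>{1..m-2}. if insert \<kappa> {0, 1} = {0, i, Suc i} then x i else 0))"
      by (rule psi_idx[OF Q])
    also have "\<dots> = (\<Sum>\<kappa>\<in>{..<m} - {0, 1}. if \<kappa> = 2 then e (w \<kappa>) (W - w ` (insert \<kappa> {0, 1})) * x 1 else 0)"
    proof (rule sum.cong[OF refl])
      fix \<kappa> assume k: "\<kappa> \<in> {..<m} - {0, 1}"
      show "e (w \<kappa>) (W - w ` (insert \<kappa> {0, 1})) *
       (\<Sum>i\<in>{1..m-2}. if insert \<kappa> {0, 1} = {0, i, Suc i} then x i else 0) =
        (if \<kappa> = 2 then e (w \<kappa>) (W - w ` (insert \<kappa> {0, 1})) * x 1 else 0)"
        unfolding inner[OF k] by simp
    qed
    also have "\<dots> = e (w 2) (W - w ` {2, 0, 1}) * x 1"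
    proof -
      have "(2::nat) \<in> {..<m} - {0, 1}" using m4 by auto
      then show ?thesis by (simp add: sum.delta)
    qed
    finally show ?thesis .
  qed
  have psiB: "psi (W - w ` {0, Suc j}) = 0" if j: "1 \<le> j" "Suc (Suc j) < m" for j
  proof -
    have Q: "{0, Suc j} \<subseteq> {..<m}" using j by auto
    have inner: "(\<Sum>i\<in>{1..m-2}. if insert \<kappa> {0, Suc j} = {0, i, Suc i} then x i else 0)
       = (if \<kappa> = j then x j else 0) + (if \<kappa> = Suc (Suc j) then x (Suc j) else 0)"
      if k: "\<kappa> \<in> {..<m} - {0, Suc j}" for \<kappa>
    proof -
      have "(\<Sum>i\<in>{1..m-2}. if insert \<kappa> {0, Suc j} = {0, i, Suc i} then x i else 0)
          = (\<Sum>i\<in>{1..m-2}. (if i = j \<and> \<kappa> = j then x i else 0) + (if i = Suc j \<and> \<kappa> = Suc (Suc j) then x i else 0))"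
      proof (rule sum.cong[OF refl])
        fix i assume "i \<in> {1..m-2}"
        then have "1 \<le> i" by simp
        have "(insert \<kappa> {0, Suc j} = {0, i, Suc i}) \<longleftrightarrow> ((i = j \<and> \<kappa> = j) \<or> (i = Suc j \<and> \<kappa> = Suc (Suc j)))"
          using triB[OF j(1) \<open>1 \<le> i\<close>, of \<kappa>] k by simp
        then show "(if insert \<kappa> {0, Suc j} = {0, i, Suc i} then x i else 0) =
          (if i = j \<and> \<kappa> = j then x i else 0) + (if i = Suc j \<and> \<kappa> = Suc (Suc j) then x i else 0)"
          by auto
      qed
      also have "\<dots> = (\<Sum>i\<in>{1..m-2}. if i = j \<and> \<kappa> = j then x i else 0) + (\<Sum>i\<in>{1..m-2}. if i = Suc j \<and> \<kappa> = Suc (Suc j) then x i else 0)"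
        by (rule sum.distrib)
      also have "\<dots> = (if \<kappa> = j then x j else 0) + (if \<kappa> = Suc (Suc j) then x (Suc j) else 0)"
      proof -
        have "j \<in> {1..m-2}" "Suc j \<in> {1..m-2}" using j by auto
        then show ?thesis by (cases "\<kappa> = j"; cases "\<kappa> = Suc (Suc j)") (simp_all add: sum.delta)
      qed
      finally show ?thesis .
    qed
    define E where "E \<kappa> = e (w \<kappa>) (W - w ` (insert \<kappa> {0, Suc j}))" for \<kappa>
    have "psi (W - w ` {0, Suc j}) = (\<Sum>\<kappa>\<in>{..<m} - {0, Suc j}. E \<kappa> *
       (\<Sum>i\<in>{1..m-2}. if insert \<kappa> {0, Suc j} = {0, i, Suc i} then x i else 0))"
      unfolding E_def by (rule psi_idx[OF Q])
    also have "\<dots> = (\<Sum>\<kappa>\<in>{..<m} - {0, Suc j}. (if \<kappa> = j then E \<kappa> * x j else 0) + (if \<kappa> = Suc (Suc j) then E \<kappa> * x (Suc j) else 0))"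
    proof (rule sum.cong[OF refl])
      fix \<kappa> assume k: "\<kappa> \<in> {..<m} - {0, Suc j}"
      show "E \<kappa> * (\<Sum>i\<in>{1..m-2}. if insert \<kappa> {0, Suc j} = {0, i, Suc i} then x i else 0) =
        (if \<kappa> = j then E \<kappa> * x j else 0) + (if \<kappa> = Suc (Suc j) then E \<kappa> * x (Suc j) else 0)"
        unfolding inner[OF k] by (simp add: distrib_left)
    qed
    also have "\<dots> = E j * x j + E (Suc (Suc j)) * x (Suc j)"
    proof -
      have "j \<in> {..<m} - {0, Suc j}" "Suc (Suc j) \<in> {..<m} - {0, Suc j}" using j by auto
      then show ?thesis by (simp add: sum.distrib sum.delta)
    qed
    also have "\<dots> = 0"
    proof -
      have EL: "E j = L j" unfolding E_def L_def by (simp add: insert_commute)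
      have EU: "E (Suc (Suc j)) = U (Suc j)" unfolding E_def U_def by (simp add: insert_commute)
      obtain j' where j': "j = Suc j'" using j(1) by (cases j) auto
      have xr: "x (Suc j) = g j * x j" unfolding x_def j' by simp
      have UU: "U (Suc j) * U (Suc j) = 1" unfolding U_def e_def by (rule sq_sign)
      have "L j * x j + U (Suc j) * (g j * x j) = L j * x j * (1 - U (Suc j) * U (Suc j))"
        unfolding g_def by (simp add: algebra_simps)
      then show ?thesis unfolding EL EU xr UU by simp
    qed
    finally show ?thesis .
  qed
  have psiC: "psi (W - w ` {\<alpha>, \<beta>}) = 0" if ab: "\<alpha> < m" "\<beta> < m" "\<alpha> \<noteq> 0" "\<beta> \<noteq> 0" "\<alpha> \<noteq> \<beta>" "\<not> cons \<alpha> \<beta>" for \<alpha> \<beta>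
  proof -
    have Q: "{\<alpha>, \<beta>} \<subseteq> {..<m}" using ab by auto
    have "psi (W - w ` {\<alpha>, \<beta>}) = (\<Sum>\<kappa>\<in>{..<m} - {\<alpha>, \<beta>}. e (w \<kappa>) (W - w ` (insert \<kappa> {\<alpha>, \<beta>})) *
       (\<Sum>i\<in>{1..m-2}. if insert \<kappa> {\<alpha>, \<beta>} = {0, i, Suc i} then x i else 0))"
      by (rule psi_idx[OF Q])
    also have "\<dots> = 0"
    proof (rule sum.neutral, intro ballI)
      fix \<kappa> assume "\<kappa> \<in> {..<m} - {\<alpha>, \<beta>}"
      have "(\<Sum>i\<in>{1..m-2}. if insert \<kappa> {\<alpha>, \<beta>} = {0, i, Suc i} then x i else 0) = 0"
      proof (rule sum.neutral, intro ballI)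
        fix i assume "i \<in> {1..m-2}"
        have "insert \<kappa> {\<alpha>, \<beta>} \<noteq> {0, i, Suc i}"
        proof
          assume "insert \<kappa> {\<alpha>, \<beta>} = {0, i, Suc i}"
          then have "\<beta> = \<alpha> + 1 \<or> \<alpha> = \<beta> + 1" using triC ab(3,4,5) by blast
          then show False using ab(6) unfolding cons_def by auto
        qed
        then show "(if insert \<kappa> {\<alpha>, \<beta>} = {0, i, Suc i} then x i else 0) = 0" by simp
      qed
      then show "e (w \<kappa>) (W - w ` (insert \<kappa> {\<alpha>, \<beta>})) *
       (\<Sum>i\<in>{1..m-2}. if insert \<kappa> {\<alpha>, \<beta>} = {0, i, Suc i} then x i else 0) = 0" by simp
    qed
    finally show ?thesis .
  qed
  have psi_zero: "psi F = 0" if F: "F \<in> Pow W" "b (ind (W - F), F) \<noteq> 0" for F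
  proof -
    have "(ind (W - F), F) \<in> kbasis n I (m - 2) m" using bsupp F(2) unfolding supported_on_def m31 by blast
    then have I2: "ind (W - F) \<in> I" and cF: "card F = m - 2" unfolding kbasis_def by auto
    have FW: "F \<subseteq> W" using F(1) by simp
    have "card (W - F) = 2" using card_Diff_subset[OF finite_subset[OF FW finW] FW] cF cardW m4 by simp
    then obtain p q where pq: "W - F = {p, q}" "p \<noteq> q" unfolding card_2_iff by blast
    then have "p \<in> W" "q \<in> W" by auto
    then obtain \<alpha> \<beta> where ab: "\<alpha> < m" "\<beta> < m" "p = w \<alpha>" "q = w \<beta>" unfolding W_def by auto
    have abne: "\<alpha> \<noteq> \<beta>" using ab pq(2) by auto
    have ncons: "\<not> cons \<alpha> \<beta>" using Hedge[OF ab(1,2)] I2 pq(1) ab(3,4) by simp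
    have Feq: "F = W - w ` {\<alpha>, \<beta>}" using FW pq(1) ab(3,4) by auto
    have key0: "psi (W - w ` {0, \<gamma>}) = 0" if gm: "\<gamma> < m" "\<gamma> \<noteq> 0" "\<not> cons 0 \<gamma>" for \<gamma>
    proof -
      have "\<gamma> \<noteq> 1" "\<gamma> \<noteq> m - 1" using gm(3) unfolding cons_def by auto
      define j where "j = \<gamma> - 1"
      have j: "\<gamma> = Suc j" "1 \<le> j" "Suc (Suc j) < m"
        using gm(1,2) \<open>\<gamma> \<noteq> 1\<close> \<open>\<gamma> \<noteq> m - 1\<close> unfolding j_def by auto
      show ?thesis unfolding j(1) by (rule psiB[OF j(2,3)])
    qed
    show ?thesis
    proof (cases "\<alpha> = 0")
      case True
      have "\<not> cons 0 \<beta>" using ncons True by simp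
      then show ?thesis unfolding Feq True using key0[OF ab(2)] abne True by simp
    next
      case a0: False
      show ?thesis
      proof (cases "\<beta> = 0")
        case True
        have "\<not> cons 0 \<alpha>" using ncons True unfolding cons_def by auto
        moreover have "{\<alpha>, \<beta>} = {0, \<alpha>}" using True by auto
        ultimately show ?thesis unfolding Feq using key0[OF ab(1) a0] by simp
      next
        case False
        then show ?thesis unfolding Feq using psiC[OF ab(1,2) a0 False abne ncons] by simp
      qed
    qed
  qed
  have "(\<Sum>G\<in>Pow W. phi G * c (ind (W - G), G)) = (\<Sum>F\<in>Pow W. dz (ind (W - F), F) * psi F)"
    unfolding c_def by (rule key)
  also have "\<dots> = (\<Sum>F\<in>Pow W. if F = W - {w 0, w 1} then psi F else 0)"
  proof (rule sum.cong[OF refl])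
    fix F assume "F \<in> Pow W"
    have WW: "W - (W - {w 0, w 1}) = {w 0, w 1}" using m4 unfolding W_def by auto
    show "dz (ind (W - F), F) * psi F = (if F = W - {w 0, w 1} then psi F else 0)"
      unfolding dz_def z_def using WW by auto
  qed
  also have "\<dots> = psi (W - {w 0, w 1})" using finW by (simp add: sum.delta)
  finally have s1: "(\<Sum>G\<in>Pow W. phi G * c (ind (W - G), G)) = psi (W - {w 0, w 1})" .
  have "(\<Sum>G\<in>Pow W. phi G * c (ind (W - G), G)) = (\<Sum>F\<in>Pow W. b (ind (W - F), F) * psi F)"
    unfolding bd[symmetric] by (rule key)
  also have "\<dots> = 0" by (rule sum.neutral) (use psi_zero in auto)
  finally have s2: "(\<Sum>G\<in>Pow W. phi G * c (ind (W - G), G)) = 0" .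
  have "x 1 = 1" unfolding x_def by simp
  then have "psi (W - {w 0, w 1}) \<noteq> 0" unfolding psi_A e_def by simp
  with s1 s2 show False by simp
qed



lemma sq_form:
  assumes "u \<in> monomials n" "\<forall>i. u i \<le> 1" "mdeg n u = 2"
  shows "\<exists>a b. a \<in> {1..n} \<and> b \<in> {1..n} \<and> a < b \<and> u = ind {a, b}"
proof -
  define S where "S = {i\<in>{1..n}. u i = 1}"
  have uS: "u = ind S"
  proof
    fix i
    have "u i \<le> 1" using assms(2) by blast
    then have "u i = 0 \<or> u i = 1" by arith
    then show "u i = ind S i"
      using assms(1) unfolding monomials_def S_def ind_def
      by (cases "i \<in> {1..n}") auto
  qed
  have SS: "S \<subseteq> {1..n}" unfolding S_def by auto
  have "card S = 2" using assms(3) mdeg_ind[OF SS] uS by simp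
  then obtain p q where pq: "S = {p, q}" "p \<noteq> q" unfolding card_2_iff by blast
  have "p \<in> {1..n}" "q \<in> {1..n}" using pq unfolding S_def by auto
  show ?thesis
  proof (cases "p < q")
    case True then show ?thesis using uS pq \<open>p \<in> _\<close> \<open>q \<in> _\<close> by (intro exI[of _ p] exI[of _ q]) simp
  next
    case False then have "q < p" using pq(2) by simp
    moreover have "{p, q} = {q, p}" by auto
    ultimately show ?thesis using uS pq \<open>p \<in> _\<close> \<open>q \<in> _\<close> by (intro exI[of _ q] exI[of _ p]) simp
  qed
qed


lemma ind_upd:
  assumes "a \<notin> {c, d}" "c \<noteq> d"
  shows "(ind {c, d})(a := ind {c, d} a + 1, d := ind {c, d} d - 1) = ind {a, c}"
  using assms unfolding ind_def by (auto simp: fun_eq_iff)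

lemma wp_lemma:
  assumes gens: "\<forall>u\<in>mingens J. \<exists>a b. a \<in> {1..n} \<and> b \<in> {1..n} \<and> a < b \<and> u = ind {a, b}"
    and cond: "\<And>a c d. a \<in> {1..n} \<Longrightarrow> c \<in> {1..n} \<Longrightarrow> d \<in> {1..n} \<Longrightarrow> a < c \<Longrightarrow> a < d \<Longrightarrow> c \<noteq> d \<Longrightarrow>
        ind {c, d} \<in> J \<Longrightarrow> ind {a, c} \<in> J \<or> ind {a, d} \<in> J"
  shows "weakly_polymatroidal n J"
  unfolding weakly_polymatroidal_def
proof (intro ballI impI)
  fix u v t assume u: "u \<in> mingens J" and v: "v \<in> mingens J" and t: "t \<in> {1..n}"
    and h: "(\<forall>l\<in>{1..n}. l < t \<longrightarrow> u l = v l) \<and> v t < u t"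
  obtain a b where ab: "a \<in> {1..n}" "b \<in> {1..n}" "a < b" "u = ind {a, b}" using gens u by blast
  obtain c d where cd: "c \<in> {1..n}" "d \<in> {1..n}" "c < d" "v = ind {c, d}" using gens v by blast
  have uJ: "u \<in> J" and vJ: "v \<in> J" using u v unfolding mingens_def by auto
  have agree: "\<And>l. l \<in> {1..n} \<Longrightarrow> l < t \<Longrightarrow> u l = v l" using h by blast
  have tab: "t \<in> {a, b}" and tcd: "t \<notin> {c, d}" using h ab(4) cd(4) unfolding ind_def by (auto split: if_splits)
  show "\<exists>j. t < j \<and> j \<le> n \<and> 1 \<le> v j \<and> (v(t := v t + 1))(j := v j - 1) \<in> J"
  proof (cases "t = a")
    case True
    have "a < c"
    proof (rule ccontr)
      assume "\<not> a < c"
      then have "c < t" using tcd True by auto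
      then have "u c = v c" using agree cd(1) by blast
      then show False using \<open>c < t\<close> True ab(3) cd(4) unfolding ab(4) ind_def by auto
    qed
    have "a < d" using \<open>a < c\<close> cd(3) by simp
    have "ind {c, d} \<in> J" using vJ cd(4) by simp
    from cond[OF ab(1) cd(1) cd(2) \<open>a < c\<close> \<open>a < d\<close> _ this] cd(3)
    have "ind {a, c} \<in> J \<or> ind {a, d} \<in> J" by simp
    then show ?thesis
    proof
      assume "ind {a, c} \<in> J"
      moreover have "(v(t := v t + 1))(d := v d - 1) = ind {a, c}"
        unfolding cd(4) True using ind_upd[of a c d] \<open>a < c\<close> \<open>a < d\<close> cd(3) by simp
      ultimately show ?thesis using True \<open>a < d\<close> cd(2,4) by (intro exI[of _ d]) (auto simp: ind_def)
    next
      assume "ind {a, d} \<in> J"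
      moreover have "(v(t := v t + 1))(c := v c - 1) = ind {a, d}"
      proof -
        have "{c, d} = {d, c}" by auto
        then show ?thesis
          unfolding cd(4) True using ind_upd[of a d c] \<open>a < c\<close> \<open>a < d\<close> cd(3) by simp
      qed
      ultimately show ?thesis using True \<open>a < c\<close> cd(1,4) by (intro exI[of _ c]) (auto simp: ind_def)
    qed
  next
    case False
    then have tb: "t = b" using tab by simp
    have "v a = 1" using agree[OF ab(1)] ab(3,4) tb unfolding ind_def by auto
    then have acd: "a \<in> {c, d}" using cd(4) unfolding ind_def by (auto split: if_splits)
    obtain e where e: "{c, d} = {a, e}" "e \<noteq> a" "e \<in> {1..n}"
    proof (cases "a = c")
      case True then show ?thesis using that[of d] cd by auto
    next
      case False then have "a = d" using acd by auto
      then show ?thesis using that[of c] cd by (auto simp: insert_commute)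
    qed
    have "e \<noteq> b" using e tcd tb by auto
    have "b < e"
    proof (rule ccontr)
      assume "\<not> b < e"
      then have "e < t" using tb \<open>e \<noteq> b\<close> by auto
      then have "u e = v e" using agree e(3) by blast
      then show False using e \<open>e \<noteq> b\<close> unfolding ab(4) cd(4) ind_def by auto
    qed
    have "(v(t := v t + 1))(e := v e - 1) = u"
      unfolding cd(4) e(1) ab(4) tb ind_def using e(2) \<open>e \<noteq> b\<close> ab(3) by (auto simp: fun_eq_iff)
    then show ?thesis using \<open>b < e\<close> e(1,3) tb cd(4) uJ by (intro exI[of _ e]) (auto simp: ind_def)
  qed
qed


lemma renum_mem:
  assumes "\<sigma> permutes S"
  shows "x \<in> renumber \<sigma> I \<longleftrightarrow> x \<circ> inv \<sigma> \<in> I"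
proof
  assume "x \<in> renumber \<sigma> I"
  then obtain u where "u \<in> I" "x = u \<circ> \<sigma>" unfolding renumber_def by auto
  moreover have "u \<circ> \<sigma> \<circ> inv \<sigma> = u" using permutes_inverses(1)[OF assms] by (auto simp: fun_eq_iff)
  ultimately show "x \<circ> inv \<sigma> \<in> I" by simp
next
  assume "x \<circ> inv \<sigma> \<in> I"
  moreover have "x = x \<circ> inv \<sigma> \<circ> \<sigma>" using permutes_inverses(2)[OF assms] by (auto simp: fun_eq_iff)
  ultimately show "x \<in> renumber \<sigma> I" unfolding renumber_def by blast
qed

lemma renum_mingens:
  assumes "\<sigma> permutes S"
  shows "x \<in> mingens (renumber \<sigma> I) \<longleftrightarrow> x \<circ> inv \<sigma> \<in> mingens I"
proof -
  let ?t = "inv \<sigma>"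
  have bk1: "\<And>v::monomial. v \<circ> \<sigma> \<circ> ?t = v" using permutes_inverses(1)[OF assms] by (auto simp: fun_eq_iff)
  have bk2: "\<And>v::monomial. v \<circ> ?t \<circ> \<sigma> = v" using permutes_inverses(2)[OF assms] by (auto simp: fun_eq_iff)
  have le: "v \<le> x \<longleftrightarrow> v \<circ> ?t \<le> x \<circ> ?t" for v x :: "monomial"
  proof
    assume "v \<le> x" then show "v \<circ> ?t \<le> x \<circ> ?t" by (auto simp: le_fun_def)
  next
    assume "v \<circ> ?t \<le> x \<circ> ?t"
    then have "v \<circ> ?t \<circ> \<sigma> \<le> x \<circ> ?t \<circ> \<sigma>" by (auto simp: le_fun_def)
    then show "v \<le> x" unfolding bk2 .
  qed
  have eq: "v = x \<longleftrightarrow> v \<circ> ?t = x \<circ> ?t" for v x :: "monomial"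
    by (metis bk2)
  show ?thesis
  proof
    assume "x \<in> mingens (renumber \<sigma> I)"
    then have xJ: "x \<circ> ?t \<in> I" and mn: "\<forall>v\<in>renumber \<sigma> I. v \<le> x \<longrightarrow> v = x"
      unfolding mingens_def renum_mem[OF assms] by auto
    show "x \<circ> ?t \<in> mingens I" unfolding mingens_def
    proof (intro CollectI conjI ballI impI)
      show "x \<circ> ?t \<in> I" by fact
      fix v assume "v \<in> I" "v \<le> x \<circ> ?t"
      then have "v \<circ> \<sigma> \<in> renumber \<sigma> I" "v \<circ> \<sigma> \<le> x" unfolding renum_mem[OF assms] bk1 le[of "v \<circ> \<sigma>" x] by auto
      then have "v \<circ> \<sigma> = x" using mn by blast
      then show "v = x \<circ> ?t" using bk1[of v] by simp
    qed
  next
    assume "x \<circ> ?t \<in> mingens I"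
    then have xI: "x \<circ> ?t \<in> I" and mn: "\<forall>v\<in>I. v \<le> x \<circ> ?t \<longrightarrow> v = x \<circ> ?t"
      unfolding mingens_def by auto
    show "x \<in> mingens (renumber \<sigma> I)" unfolding mingens_def
    proof (intro CollectI conjI ballI impI)
      show "x \<in> renumber \<sigma> I" unfolding renum_mem[OF assms] by fact
      fix v assume "v \<in> renumber \<sigma> I" "v \<le> x"
      then have "v \<circ> ?t \<in> I" "v \<circ> ?t \<le> x \<circ> ?t" unfolding renum_mem[OF assms] le[of v x] by auto
      then show "v = x" using mn eq by blast
    qed
  qed
qed

lemma ind_comp_inv:
  assumes "\<sigma> permutes S"
  shows "ind {c, d} \<circ> inv \<sigma> = ind {\<sigma> c, \<sigma> d}"
  unfolding ind_def using permutes_inv_eq[OF assms] by (auto simp: fun_eq_iff)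

theorem lemma5p3:
  fixes n :: nat and I :: "monomial set"
  assumes "is_monomial_ideal n I"
    and "squarefree_gen_deg2 n I"
    and "has_linear_resolution TYPE('k::field) 2 n I"
  shows "\<exists>\<sigma>. \<sigma> permutes {1..n} \<and> weakly_polymatroidal n (renumber \<sigma> I)"
proof -
  have gr: "graph (Hadj n I)"
    unfolding graph_def using no_cycle[OF assms(1) assms(3)] by (auto simp: Hadj_def insert_commute)
  obtain L where L: "distinct L" "set L = {1..n}" and peo: "\<forall>i<length L. simpl (Hadj n I) (set (drop i L)) (L ! i)"
    using graph.peo[OF gr, of "{1..n}"] by auto
  have lenL: "length L = n" using distinct_card[OF L(1)] L(2) by simp
  define \<sigma> where "\<sigma> i = (if i \<in> {1..n} then L ! (i - 1) else i)" for i
  have \<sigma>n: "\<sigma> i \<in> {1..n}" if "i \<in> {1..n}" for i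
    using that L(2) lenL unfolding \<sigma>_def by (auto intro!: nth_mem[of "i - 1" L, simplified L(2)])
  have \<sigma>inj: "inj_on \<sigma> {1..n}"
  proof (rule inj_onI)
    fix i j assume "i \<in> {1..n}" "j \<in> {1..n}" "\<sigma> i = \<sigma> j"
    then have "L ! (i - 1) = L ! (j - 1)" unfolding \<sigma>_def by simp
    moreover have "i - 1 < length L" "j - 1 < length L" using \<open>i \<in> _\<close> \<open>j \<in> _\<close> lenL by auto
    ultimately have "i - 1 = j - 1" using nth_eq_iff_index_eq[OF L(1)] by blast
    then show "i = j" using \<open>i \<in> _\<close> \<open>j \<in> _\<close> by auto
  qed
  have \<sigma>img: "\<sigma> ` {1..n} = {1..n}"
  proof -
    have "\<sigma> ` {1..n} \<subseteq> {1..n}" using \<sigma>n by auto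
    moreover have "card (\<sigma> ` {1..n}) = card {1..n}" using card_image[OF \<sigma>inj] .
    ultimately show ?thesis by (simp add: card_subset_eq)
  qed
  have perm: "\<sigma> permutes {1..n}"
  proof (rule bij_imp_permutes)
    show "bij_betw \<sigma> {1..n} {1..n}" unfolding bij_betw_def using \<sigma>inj \<sigma>img by blast
    fix x assume "x \<notin> {1..n}" then show "\<sigma> x = x" unfolding \<sigma>_def by auto
  qed
  define J where "J = renumber \<sigma> I"
  have IM: "I \<subseteq> monomials n" using assms(1) unfolding is_monomial_ideal_def by auto
  have gens: "\<forall>u\<in>mingens J. \<exists>a b. a \<in> {1..n} \<and> b \<in> {1..n} \<and> a < b \<and> u = ind {a, b}"
  proof
    fix x assume "x \<in> mingens J"
    then have y: "x \<circ> inv \<sigma> \<in> mingens I" unfolding J_def renum_mingens[OF perm] .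
    define y where "y = x \<circ> inv \<sigma>"
    have xy: "x = y \<circ> \<sigma>" unfolding y_def using permutes_inverses(2)[OF perm] by (auto simp: fun_eq_iff)
    have ymin: "y \<in> mingens I" using y unfolding y_def .
    then have yI: "y \<in> I" unfolding mingens_def by auto
    have y1: "\<forall>i. y i \<le> 1" and y2: "mdeg n y = 2" using assms(2) ymin unfolding squarefree_gen_deg2_def by auto
    have ym: "y \<in> monomials n" using yI IM by auto
    have xm: "x \<in> monomials n" using ym permutes_not_in[OF perm] unfolding xy monomials_def by auto
    have x1: "\<forall>i. x i \<le> 1" using y1 unfolding xy by simp
    have "mdeg n x = (\<Sum>i\<in>{1..n}. y (\<sigma> i))" unfolding mdeg_def xy by simp
    also have "\<dots> = (\<Sum>i\<in>\<sigma> ` {1..n}. y i)" using sum.reindex[OF \<sigma>inj, of y] by simp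
    also have "\<dots> = mdeg n y" unfolding \<sigma>img mdeg_def ..
    finally have x2: "mdeg n x = 2" using y2 by simp
    show "\<exists>a b. a \<in> {1..n} \<and> b \<in> {1..n} \<and> a < b \<and> x = ind {a, b}" using sq_form[OF xm x1 x2] .
  qed
  have indJ: "ind {c, d} \<in> J \<longleftrightarrow> ind {\<sigma> c, \<sigma> d} \<in> I" for c d
    unfolding J_def renum_mem[OF perm] ind_comp_inv[OF perm] ..
  have cond: "ind {a, c} \<in> J \<or> ind {a, d} \<in> J"
    if a: "a \<in> {1..n}" "c \<in> {1..n}" "d \<in> {1..n}" "a < c" "a < d" "c \<noteq> d" "ind {c, d} \<in> J" for a c d
  proof (rule ccontr)
    assume "\<not> (ind {a, c} \<in> J \<or> ind {a, d} \<in> J)"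
    then have n1: "ind {\<sigma> a, \<sigma> c} \<notin> I" and n2: "ind {\<sigma> a, \<sigma> d} \<notin> I" unfolding indJ by auto
    have cI: "ind {\<sigma> c, \<sigma> d} \<in> I" using a(7) unfolding indJ .
    have ai: "a - 1 < length L" using a(1) lenL by auto
    have simp_a: "simpl (Hadj n I) (set (drop (a - 1) L)) (L ! (a - 1))" using peo ai by blast
    have inset: "L ! (k - 1) \<in> set (drop (a - 1) L)" if "k \<in> {1..n}" "a \<le> k" for k
    proof -
      have "k - 1 < length L" using that lenL by auto
      then have "drop (a - 1) L ! (k - 1 - (a - 1)) = L ! (k - 1)" using that a(1) by (simp)
      moreover have "k - 1 - (a - 1) < length (drop (a - 1) L)" using that lenL a(1) by auto
      ultimately show ?thesis by (metis nth_mem)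
    qed
    have sa: "\<sigma> a = L ! (a - 1)" and sc: "\<sigma> c = L ! (c - 1)" and sd: "\<sigma> d = L ! (d - 1)"
      using a unfolding \<sigma>_def by auto
    have cin: "\<sigma> c \<in> set (drop (a - 1) L)" "\<sigma> d \<in> set (drop (a - 1) L)"
      unfolding sc sd using inset a by auto
    have ne: "\<sigma> a \<noteq> \<sigma> c" "\<sigma> a \<noteq> \<sigma> d" "\<sigma> c \<noteq> \<sigma> d"
      using inj_onD[OF \<sigma>inj] a by (metis less_irrefl)+
    have h1: "Hadj n I (\<sigma> a) (\<sigma> c)" "Hadj n I (\<sigma> a) (\<sigma> d)"
      unfolding Hadj_def using ne n1 n2 \<sigma>n a by auto
    have "Hadj n I (\<sigma> c) (\<sigma> d)"
      using simp_a cin h1 ne(3) unfolding simpl_def sa[symmetric] by blast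
    then show False using cI unfolding Hadj_def by simp
  qed
  have "weakly_polymatroidal n J" by (rule wp_lemma[OF gens cond])
  then show ?thesis using perm unfolding J_def by blast
qed

end
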